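(* Let $\mathcal{T}=[0,T_{max}]$, $\mathcal{T}_d,\mathcal{T}_a\subseteq\mathcal{T}$ compact, $\mathcal{X}=[X_{min},X_{max}]$ with $0\le X_{min}<X_{max}$, $m$ a probability measure on $\mathcal{X}\times\mathcal{T}_a$, $G>0$, and $V:\mathbb{R}^+\to\mathbb{R}^+$ a strictly decreasing Lipschitz continuous speed function. Fix $F\in\mathcal{P}_{m,G}$ and define $\mathcal{U}(\cdot,F):\mathcal{C}(\mathcal{T})\to\mathcal{C}(\mathcal{T})$ by $\mathcal{U}(z,F)(t)=\int_0^t V\big(F(S_s(z))\big)\,ds$. Then for an arbitrary $z_0\in\mathcal{C}(\mathcal{T})$, the sequence $z_l:=\mathcal{U}(z_{l-1},F)$, $l\ge1$, converges uniformly on $\mathcal{T}$ to $z^*$, the unique function in $\mathcal{C}(\mathcal{T})$ satisfying $z^*(t)=\int_0^t V\big(F(S_s(z^* ))\big)\,ds$ for all $t\in\mathcal{T}$.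
   Context: $\mathcal{C}(\mathcal{T})$ denotes the space of real-valued continuous functions on $\mathcal{T}$ with the uniform norm. $\lambda_2$ denotes Lebesgue measure on $\mathbb{R}^2$. $\mathcal{P}_{m,G}$ is the set of all Borel probability measures $F$ on $\mathcal{T}_d\times\mathcal{X}$ such that (i) $F(B)\le G\,\lambda_2(B)$ for every Borel set $B\subseteq\mathcal{T}_d\times\mathcal{X}$, and (ii) $F(\mathcal{T}_d\times B)=m(B\times\mathcal{T}_a)$ for every Borel set $B\subseteq\mathcal{X}$. For $z\in\mathcal{C}(\mathcal{T})$ and $t\in\mathcal{T}$, $S_t(z):=\{(\tau,\xi)\,:\,\tau\in[0,t]\cap\mathcal{T}_d,\ \xi\in(z(t)-z(\tau),\infty)\cap\mathcal{X}\}$. *)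

theory Defs
  imports "HOL-Analysis.Analysis" "HOL-Probability.Probability"
begin

definition S_set :: "real set \<Rightarrow> real set \<Rightarrow> real \<Rightarrow> (real \<Rightarrow> real) \<Rightarrow> (real \<times> real) set" where
  "S_set Td X t z = {(\<tau>, \<xi>). \<tau> \<in> {0..t} \<inter> Td \<and> \<xi> \<in> {z t - z \<tau><..} \<inter> X}"

definition P_mG :: "real set \<Rightarrow> real set \<Rightarrow> real set \<Rightarrow> (real \<times> real) measure \<Rightarrow> real
    \<Rightarrow> (real \<times> real) measure set" where
  "P_mG Td Ta X m G = {F. prob_space F \<and> sets F = sets (restrict_space borel (Td \<times> X))
     \<and> (\<forall>B \<in> sets (borel :: (real \<times> real) measure). B \<subseteq> Td \<times> X \<longrightarrow>
          emeasure F B \<le> ennreal G * emeasure lborel B)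
     \<and> (\<forall>B \<in> sets (borel :: real measure). B \<subseteq> X \<longrightarrow>
          emeasure F (Td \<times> B) = emeasure m (B \<times> Ta))}"

definition U_op :: "real set \<Rightarrow> real set \<Rightarrow> (real \<Rightarrow> real) \<Rightarrow> (real \<times> real) measure
    \<Rightarrow> (real \<Rightarrow> real) \<Rightarrow> real \<Rightarrow> real" where
  "U_op Td X V F z t = integral {0..t} (\<lambda>s. V (measure F (S_set Td X s z)))"

end

theory Submission
  imports Defs
begin

locale setting =
  fixes Tmax G Xmin Xmax L :: real and Td :: "real set" and F :: "(real \<times> real) measure"
    and V :: "real \<Rightarrow> real"
  assumes Tmax: "0 < Tmax" and Tdc: "compact Td" and TdI: "Td \<subseteq> {0..Tmax}"
    and X: "Xmin < Xmax" and G: "G > 0"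
    and Fprob: "prob_space F"
    and Fsets: "sets F = sets (restrict_space borel (Td \<times> {Xmin..Xmax}))"
    and Fdens: "\<forall>B \<in> sets (borel :: (real \<times> real) measure). B \<subseteq> Td \<times> {Xmin..Xmax} \<longrightarrow>
          emeasure F B \<le> ennreal G * emeasure lborel B"
    and Vlip: "L-lipschitz_on {0..} V"
begin

definition Tset :: "real \<Rightarrow> (real \<Rightarrow> real) \<Rightarrow> (real \<times> real) set" where
  "Tset a h = {(\<tau>, \<xi>). \<tau> \<in> {0..a} \<inter> Td \<and> \<xi> \<in> {h \<tau><..} \<inter> {Xmin..Xmax}}"

lemma Tset_borel:
  assumes "continuous_on UNIV h"
  shows "Tset a h \<in> sets borel"
proof -
  have eq: "Tset a h = (({0..a} \<inter> Td) \<times> {Xmin..Xmax}) \<inter> {p. h (fst p) < snd p}"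
    by (auto simp: Tset_def)
  have "closed (({0..a} \<inter> Td) \<times> {Xmin..Xmax})"
    using Tdc by (intro closed_Times closed_Int) (auto intro: compact_imp_closed)
  moreover have "open {p. h (fst p) < snd p}"
    by (intro open_Collect_less continuous_on_compose2[OF assms] continuous_intros) auto
  ultimately show ?thesis unfolding eq by (intro sets.Int borel_closed borel_open)
qed

lemma Tset_sub: "Tset a h \<subseteq> Td \<times> {Xmin..Xmax}"
  by (auto simp: Tset_def)

lemma inF:
  assumes "A \<in> sets borel" "A \<subseteq> Td \<times> {Xmin..Xmax}"
  shows "A \<in> sets F"
proof -
  have "closed (Td \<times> {Xmin..Xmax})"
    using Tdc by (intro closed_Times) (auto intro: compact_imp_closed)
  then have "(Td \<times> {Xmin..Xmax}) \<inter> space borel \<in> sets borel" by auto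
  then show ?thesis unfolding Fsets using assms by (subst sets_restrict_space_iff) auto
qed

lemma Fbound:
  assumes "A \<in> sets borel" "A \<subseteq> Td \<times> {Xmin..Xmax}" "emeasure lborel A \<le> ennreal c" "c \<ge> 0"
  shows "measure F A \<le> G * c"
proof -
  interpret prob_space F by (rule Fprob)
  have "ennreal (measure F A) = emeasure F A"
    using inF[OF assms(1,2)] by (simp add: emeasure_eq_measure)
  also have "\<dots> \<le> ennreal G * emeasure lborel A" using Fdens assms by auto
  also have "\<dots> \<le> ennreal G * ennreal c" using assms(3) by (intro mult_left_mono) auto
  also have "\<dots> = ennreal (G * c)" using G assms by (simp add: ennreal_mult)
  finally show ?thesis using G assms by (subst (asm) ennreal_le_iff) auto
qed

lemma slice:
  fixes A :: "(real \<times> real) set"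
  assumes "A \<in> sets borel" "\<And>\<tau>. emeasure lborel (Pair \<tau> -` A) \<le> f \<tau>"
  shows "emeasure lborel A \<le> (\<integral>\<^sup>+\<tau>. f \<tau> \<partial>lborel)"
proof -
  have A': "A \<in> sets (lborel \<Otimes>\<^sub>M lborel)" unfolding lborel_prod using assms(1) by simp
  have "emeasure lborel A = emeasure (lborel \<Otimes>\<^sub>M (lborel::real measure)) A"
    by (simp add: lborel_prod)
  also have "\<dots> = (\<integral>\<^sup>+x. emeasure lborel (Pair x -` A) \<partial>lborel)"
    by (rule lborel.emeasure_pair_measure_alt[OF A'])
  also have "\<dots> \<le> (\<integral>\<^sup>+\<tau>. f \<tau> \<partial>lborel)"
    by (intro nn_integral_mono assms(2))
  finally show ?thesis .
qed

lemma L1: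
  assumes h1: "continuous_on UNIV h1" and h2: "continuous_on UNIV h2"
    and ab: "0 \<le> a" "a \<le> b" and r: "r \<ge> 0"
    and hr: "\<forall>\<tau>\<in>{0..a}. \<bar>h1 \<tau> - h2 \<tau>\<bar> \<le> r"
  shows "measure F (Tset b h2) - measure F (Tset a h1) \<le> G * (r * a + (Xmax - Xmin) * (b - a))"
proof -
  interpret prob_space F by (rule Fprob)
  define E where "E = Tset b h2 - Tset a h1"
  have Eb: "E \<in> sets borel" unfolding E_def using Tset_borel h1 h2 by auto
  have Es: "E \<subseteq> Td \<times> {Xmin..Xmax}" unfolding E_def using Tset_sub by auto
  define f where "f \<tau> = ennreal r * indicator {0..a} \<tau> + ennreal (Xmax - Xmin) * indicator {a..b} \<tau>" for \<tau> :: real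
  have sl: "emeasure lborel (Pair \<tau> -` E) \<le> f \<tau>" for \<tau>
  proof (cases "\<tau> \<in> {0..a}")
    case True
    then have "Pair \<tau> -` E \<subseteq> {h2 \<tau> .. h2 \<tau> + r}"
      using hr ab by (force simp: E_def Tset_def)
    then have "emeasure lborel (Pair \<tau> -` E) \<le> emeasure lborel {h2 \<tau> .. h2 \<tau> + r}"
      by (intro emeasure_mono) auto
    also have "\<dots> = ennreal r" using r by simp
    also have "\<dots> \<le> f \<tau>" using True by (simp add: f_def)
    finally show ?thesis .
  next
    case False
    show ?thesis
    proof (cases "\<tau> \<in> {a..b}")
      case True
      then have "Pair \<tau> -` E \<subseteq> {Xmin .. Xmax}"
        by (auto simp: E_def Tset_def)
      then have "emeasure lborel (Pair \<tau> -` E) \<le> emeasure lborel {Xmin .. Xmax}"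
        by (intro emeasure_mono) auto
      also have "\<dots> = ennreal (Xmax - Xmin)" using X by simp
      also have "\<dots> \<le> f \<tau>" using True by (simp add: f_def)
      finally show ?thesis .
    next
      case False2: False
      then have "Pair \<tau> -` E = {}" using False ab by (auto simp: E_def Tset_def)
      then show ?thesis by simp
    qed
  qed
  have "emeasure lborel E \<le> (\<integral>\<^sup>+\<tau>. f \<tau> \<partial>lborel)"
    by (rule slice[OF Eb sl])
  also have "(\<integral>\<^sup>+\<tau>. f \<tau> \<partial>lborel) = ennreal r * ennreal a + ennreal (Xmax - Xmin) * ennreal (b - a)"
    unfolding f_def using ab
    by (subst nn_integral_add) (auto simp: nn_integral_cmult_indicator)
  also have "\<dots> = ennreal (r * a + (Xmax - Xmin) * (b - a))"
    using ab r X by (simp add: ennreal_mult ennreal_plus)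
  finally have "measure F E \<le> G * (r * a + (Xmax - Xmin) * (b - a))"
    by (intro Fbound Eb Es) (use ab r X in auto)
  moreover have "measure F E = measure F (Tset b h2) - measure F (Tset b h2 \<inter> Tset a h1)"
    unfolding E_def
    by (rule finite_measure_Diff') (use inF Tset_borel Tset_sub h1 h2 in auto)
  moreover have "measure F (Tset b h2 \<inter> Tset a h1) \<le> measure F (Tset a h1)"
    by (rule finite_measure_mono) (use inF Tset_borel Tset_sub h1 in auto)
  ultimately show ?thesis by linarith
qed

definition P :: "(real \<Rightarrow> real) \<Rightarrow> real \<Rightarrow> real" where
  "P z s = measure F (S_set Td {Xmin..Xmax} s z)"

lemma S_Tset: "S_set Td {Xmin..Xmax} s z = Tset s (\<lambda>\<tau>. z s - z \<tau>)"
  by (simp add: S_set_def Tset_def)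

lemma P_nonneg: "P z s \<ge> 0"
  by (simp add: P_def)

lemma P_diff:
  assumes z: "continuous_on UNIV z" and w: "continuous_on UNIV w" and s: "0 \<le> s"
    and r: "r \<ge> 0" and hr: "\<forall>\<tau>\<in>{0..s}. \<bar>(z s - z \<tau>) - (w s - w \<tau>)\<bar> \<le> r"
  shows "\<bar>P z s - P w s\<bar> \<le> G * r * s"
proof -
  have cz: "continuous_on UNIV (\<lambda>\<tau>. z s - z \<tau>)" using z by (intro continuous_intros)
  have cw: "continuous_on UNIV (\<lambda>\<tau>. w s - w \<tau>)" using w by (intro continuous_intros)
  have hr': "\<forall>\<tau>\<in>{0..s}. \<bar>(w s - w \<tau>) - (z s - z \<tau>)\<bar> \<le> r" using hr by (auto simp: abs_minus_commute)
  have 1: "P w s - P z s \<le> G * (r * s + (Xmax - Xmin) * (s - s))"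
    unfolding P_def S_Tset by (rule L1[OF cz cw s order_refl r hr])
  have 2: "P z s - P w s \<le> G * (r * s + (Xmax - Xmin) * (s - s))"
    unfolding P_def S_Tset by (rule L1[OF cw cz s order_refl r hr'])
  show ?thesis using 1 2 by (simp add: algebra_simps)
qed

lemma P_lip_le:
  assumes z: "continuous_on UNIV z" and s: "0 \<le> s" "s \<le> s'" "s' \<le> Tmax"
  shows "\<bar>P z s' - P z s\<bar> \<le> G * (Tmax * \<bar>z s - z s'\<bar> + (Xmax - Xmin) * (s' - s))"
proof -
  define r where "r = \<bar>z s - z s'\<bar>"
  have r: "r \<ge> 0" by (simp add: r_def)
  have ch: "continuous_on UNIV (\<lambda>\<tau>. z s - z \<tau>)" using z by (intro continuous_intros)
  have ch': "continuous_on UNIV (\<lambda>\<tau>. z s' - z \<tau>)" using z by (intro continuous_intros)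
  have hr: "\<forall>\<tau>\<in>{0..s}. \<bar>(z s - z \<tau>) - (z s' - z \<tau>)\<bar> \<le> r" by (simp add: r_def)
  have hr': "\<forall>\<tau>\<in>{0..s}. \<bar>(z s' - z \<tau>) - (z s - z \<tau>)\<bar> \<le> r" by (simp add: r_def abs_minus_commute)
  have 1: "P z s' - P z s \<le> G * (r * s + (Xmax - Xmin) * (s' - s))"
    unfolding P_def S_Tset by (rule L1[OF ch ch' s(1,2) r hr])
  have 2: "measure F (Tset s (\<lambda>\<tau>. z s - z \<tau>)) - measure F (Tset s (\<lambda>\<tau>. z s' - z \<tau>)) \<le> G * (r * s + (Xmax - Xmin) * (s - s))"
    by (rule L1[OF ch' ch s(1) order_refl r hr'])
  have 3: "measure F (Tset s (\<lambda>\<tau>. z s' - z \<tau>)) \<le> measure F (Tset s' (\<lambda>\<tau>. z s' - z \<tau>))"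
  proof -
    interpret prob_space F by (rule Fprob)
    have sub: "Tset s (\<lambda>\<tau>. z s' - z \<tau>) \<subseteq> Tset s' (\<lambda>\<tau>. z s' - z \<tau>)"
      using s by (auto simp: Tset_def)
    show ?thesis
      by (rule finite_measure_mono[OF sub inF[OF Tset_borel[OF ch'] Tset_sub]])
  qed
  have "G * r * s \<le> G * r * Tmax" using G r s by (intro mult_left_mono) auto
  moreover have "G * ((Xmax - Xmin) * (s' - s)) \<ge> 0" using G X s by auto
  moreover have "G * (r * s + (Xmax - Xmin) * (s' - s)) = G * r * s + G * ((Xmax - Xmin) * (s' - s))"
    "G * (r * s + (Xmax - Xmin) * (s - s)) = G * r * s"
    "G * (Tmax * r + (Xmax - Xmin) * (s' - s)) = G * r * Tmax + G * ((Xmax - Xmin) * (s' - s))"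
    by (simp_all add: algebra_simps)
  ultimately show ?thesis using 1 2 3 unfolding P_def S_Tset r_def[symmetric]
    by linarith
qed

lemma P_lip:
  assumes z: "continuous_on UNIV z" and s: "s \<in> {0..Tmax}" "s' \<in> {0..Tmax}"
  shows "\<bar>P z s' - P z s\<bar> \<le> G * (Tmax * \<bar>z s' - z s\<bar> + (Xmax - Xmin) * \<bar>s' - s\<bar>)"
proof (cases "s \<le> s'")
  case True
  then show ?thesis using P_lip_le[OF z, of s s'] s abs_minus_commute[of "z s" "z s'"] by simp
next
  case False
  then have "\<bar>P z s - P z s'\<bar> \<le> G * (Tmax * \<bar>z s' - z s\<bar> + (Xmax - Xmin) * (s - s'))"
    using P_lip_le[OF z, of s' s] s by simp
  then show ?thesis using False by (simp add: abs_minus_commute)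
qed

lemma cont_from_bound:
  fixes f g :: "real \<Rightarrow> real"
  assumes g: "continuous_on S g" and b: "\<forall>x\<in>S. \<forall>y\<in>S. \<bar>f y - f x\<bar> \<le> K * \<bar>g y - g x\<bar> + K' * \<bar>y - x\<bar>"
  shows "continuous_on S f"
  unfolding continuous_on_def
proof
  fix x assume x: "x \<in> S"
  have gx: "(g \<longlongrightarrow> g x) (at x within S)" using g x by (simp add: continuous_on_def)
  have "((\<lambda>y. K * \<bar>g y - g x\<bar> + K' * \<bar>y - x\<bar>) \<longlongrightarrow> K * \<bar>g x - g x\<bar> + K' * \<bar>x - x\<bar>) (at x within S)"
    by (intro tendsto_intros gx)
  then have t0: "((\<lambda>y. K * \<bar>g y - g x\<bar> + K' * \<bar>y - x\<bar>) \<longlongrightarrow> 0) (at x within S)" by simp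
  have ev: "eventually (\<lambda>y. norm (f y - f x) \<le> K * \<bar>g y - g x\<bar> + K' * \<bar>y - x\<bar>) (at x within S)"
    unfolding eventually_at_filter
  proof (rule always_eventually, intro allI impI)
    fix y assume "y \<in> S"
    then show "norm (f y - f x) \<le> K * \<bar>g y - g x\<bar> + K' * \<bar>y - x\<bar>"
      using b x unfolding real_norm_def by blast
  qed
  have "((\<lambda>y. f y - f x) \<longlongrightarrow> 0) (at x within S)"
    by (rule Lim_null_comparison[OF ev t0])
  then show "(f \<longlongrightarrow> f x) (at x within S)" by (simp add: LIM_zero_iff)
qed

lemma P_cont:
  assumes z: "continuous_on UNIV z"
  shows "continuous_on {0..Tmax} (P z)"
proof (rule cont_from_bound[where g=z and K="G*Tmax" and K'="G*(Xmax-Xmin)"])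
  show "continuous_on {0..Tmax} z" using z by (rule continuous_on_subset) auto
  show "\<forall>x\<in>{0..Tmax}. \<forall>y\<in>{0..Tmax}. \<bar>P z y - P z x\<bar> \<le> G * Tmax * \<bar>z y - z x\<bar> + G * (Xmax - Xmin) * \<bar>y - x\<bar>"
    using P_lip[OF z] by (simp add: algebra_simps)
qed

lemma V_cont: "continuous_on {0..} V"
  using Vlip by (rule lipschitz_on_continuous_on)

lemma VP_cont:
  assumes z: "continuous_on UNIV z"
  shows "continuous_on {0..Tmax} (\<lambda>s. V (P z s))"
  by (rule continuous_on_compose2[OF V_cont P_cont[OF z]]) (auto simp: P_nonneg)

definition ext :: "(real \<Rightarrow> real) \<Rightarrow> real \<Rightarrow> real" where
  "ext f t = f (max 0 (min Tmax t))"

lemma ext_cont: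
  assumes "continuous_on {0..Tmax} f"
  shows "continuous_on UNIV (ext f)"
  unfolding ext_def
  by (rule continuous_on_compose2[OF assms, of UNIV "\<lambda>t. max 0 (min Tmax t)"])
     (use Tmax in \<open>auto intro!: continuous_intros\<close>)

lemma ext_eq: "t \<in> {0..Tmax} \<Longrightarrow> ext f t = f t"
  by (auto simp: ext_def)

abbreviation U where "U \<equiv> U_op Td {Xmin..Xmax} V F"

lemma U_ext:
  assumes t: "t \<in> {0..Tmax}"
  shows "U f t = integral {0..t} (\<lambda>s. V (P (ext f) s))"
  unfolding U_op_def P_def
proof (rule integral_cong)
  fix s assume s: "s \<in> {0..t}"
  have "S_set Td {Xmin..Xmax} s f = S_set Td {Xmin..Xmax} s (ext f)"
    using s t unfolding S_set_def by (auto simp: ext_def)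
  then show "V (measure F (S_set Td {Xmin..Xmax} s f)) = V (measure F (S_set Td {Xmin..Xmax} s (ext f)))"
    by simp
qed

lemma U_cont:
  assumes f: "continuous_on {0..Tmax} f"
  shows "continuous_on {0..Tmax} (U f)"
proof -
  have "(\<lambda>s. V (P (ext f) s)) integrable_on {0..Tmax}"
    by (rule integrable_continuous_interval[OF VP_cont[OF ext_cont[OF f]]])
  then have "continuous_on {0..Tmax} (\<lambda>t. integral {0..t} (\<lambda>s. V (P (ext f) s)))"
    by (rule indefinite_integral_continuous_1)
  then show ?thesis
    by (rule continuous_on_eq) (simp add: U_ext)
qed

definition K where "K = 2 * L * G * Tmax"
definition beta where "beta = 2 * K + 1"

lemma L_nonneg: "L \<ge> 0" using Vlip by (simp add: lipschitz_on_def)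
lemma K_nonneg: "K \<ge> 0" using L_nonneg G Tmax by (simp add: K_def)
lemma beta_pos: "beta > 0" using K_nonneg by (simp add: beta_def)

lemma contr:
  assumes u: "continuous_on {0..Tmax} u" and v: "continuous_on {0..Tmax} v"
    and c: "c \<ge> 0" and hb0: "\<forall>t\<in>{0..Tmax}. \<bar>u t - v t\<bar> \<le> c * exp (beta * t)"
    and t: "t \<in> {0..Tmax}"
  shows "\<bar>U u t - U v t\<bar> \<le> c / 2 * exp (beta * t)"
proof -
  define u' where "u' = ext u"
  define v' where "v' = ext v"
  have cu: "continuous_on UNIV u'" unfolding u'_def by (rule ext_cont[OF u])
  have cv: "continuous_on UNIV v'" unfolding v'_def by (rule ext_cont[OF v])
  have hb: "\<bar>u' \<tau> - v' \<tau>\<bar> \<le> c * exp (beta * \<tau>)" if "\<tau> \<in> {0..Tmax}" for \<tau>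
    using hb0 that by (simp add: u'_def v'_def ext_eq)
  have pw: "\<bar>V (P u' s) - V (P v' s)\<bar> \<le> K * c * exp (beta * s)" if s: "s \<in> {0..t}" for s
  proof -
    have sI: "s \<in> {0..Tmax}" using s t by auto
    have r: "\<forall>\<tau>\<in>{0..s}. \<bar>(u' s - u' \<tau>) - (v' s - v' \<tau>)\<bar> \<le> 2 * c * exp (beta * s)"
    proof
      fix \<tau> assume \<tau>: "\<tau> \<in> {0..s}"
      then have \<tau>I: "\<tau> \<in> {0..Tmax}" using sI by auto
      have "exp (beta * \<tau>) \<le> exp (beta * s)" using \<tau> beta_pos by (auto intro: mult_left_mono)
      then have "c * exp (beta * \<tau>) \<le> c * exp (beta * s)" using c by (rule mult_left_mono)
      moreover have "\<bar>(u' s - u' \<tau>) - (v' s - v' \<tau>)\<bar> \<le> \<bar>u' s - v' s\<bar> + \<bar>u' \<tau> - v' \<tau>\<bar>" by linarith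
      ultimately show "\<bar>(u' s - u' \<tau>) - (v' s - v' \<tau>)\<bar> \<le> 2 * c * exp (beta * s)"
        using hb[OF sI] hb[OF \<tau>I] by linarith
    qed
    have Pd: "\<bar>P u' s - P v' s\<bar> \<le> G * (2 * c * exp (beta * s)) * s"
      by (rule P_diff[OF cu cv _ _ r]) (use s c in auto)
    have "\<bar>V (P u' s) - V (P v' s)\<bar> \<le> L * \<bar>P u' s - P v' s\<bar>"
      using Vlip P_nonneg unfolding lipschitz_on_def dist_real_def by auto
    also have "\<dots> \<le> L * (G * (2 * c * exp (beta * s)) * s)"
      using Pd L_nonneg by (rule mult_left_mono)
    also have "\<dots> \<le> L * (G * (2 * c * exp (beta * s)) * Tmax)"
      using L_nonneg G c sI by (intro mult_left_mono) auto
    also have "\<dots> = K * c * exp (beta * s)" by (simp add: K_def)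
    finally show ?thesis .
  qed
  have i1: "(\<lambda>s. V (P u' s)) integrable_on {0..t}"
    by (rule integrable_continuous_interval, rule continuous_on_subset[OF VP_cont[OF cu]]) (use t in auto)
  have i2: "(\<lambda>s. V (P v' s)) integrable_on {0..t}"
    by (rule integrable_continuous_interval, rule continuous_on_subset[OF VP_cont[OF cv]]) (use t in auto)
  have hi: "((\<lambda>s. K * c * exp (beta * s)) has_integral (K * c * exp (beta * t) / beta - K * c * exp (beta * 0) / beta)) {0..t}"
  proof (rule fundamental_theorem_of_calculus)
    show "0 \<le> t" using t by auto
    fix x :: real
    show "((\<lambda>s. K * c * exp (beta * s) / beta) has_vector_derivative K * c * exp (beta * x)) (at x within {0..t})"
      using beta_pos
      by (auto intro!: derivative_eq_intros simp: has_real_derivative_iff_has_vector_derivative[symmetric])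
  qed
  have "\<bar>U u t - U v t\<bar> = \<bar>integral {0..t} (\<lambda>s. V (P u' s) - V (P v' s))\<bar>"
    using t integral_diff[OF i1 i2] by (simp add: U_ext u'_def v'_def)
  also have "\<dots> \<le> integral {0..t} (\<lambda>s. K * c * exp (beta * s))"
    using integral_norm_bound_integral[OF integrable_diff[OF i1 i2] has_integral_integrable[OF hi]] pw
    by simp
  also have "\<dots> = K * c * exp (beta * t) / beta - K * c / beta"
    using integral_unique[OF hi] by simp
  also have "\<dots> \<le> K * c * exp (beta * t) / beta"
    using K_nonneg c beta_pos by simp
  also have "\<dots> \<le> c / 2 * exp (beta * t)"
  proof -
    have "2 * K \<le> beta" by (simp add: beta_def)
    then have "2 * K * (c * exp (beta * t)) \<le> beta * (c * exp (beta * t))"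
      using c by (intro mult_right_mono) auto
    then show ?thesis using beta_pos by (simp add: field_simps)
  qed
  finally show ?thesis .
qed

lemma bnd:
  assumes f: "continuous_on {0..Tmax} f"
  shows "\<exists>c\<ge>0. \<forall>t\<in>{0..Tmax}. \<bar>f t\<bar> \<le> c * exp (beta * t)"
proof -
  have "bounded (f ` {0..Tmax})"
    by (rule compact_imp_bounded[OF compact_continuous_image[OF f compact_Icc]])
  then obtain a where a: "\<forall>x\<in>f ` {0..Tmax}. norm x \<le> a" by (auto simp: bounded_iff)
  show ?thesis
  proof (intro exI[of _ "max a 0"] conjI ballI)
    fix t assume t: "t \<in> {0..Tmax}"
    have "1 \<le> exp (beta * t)" using t beta_pos by simp
    then have "max a 0 * 1 \<le> max a 0 * exp (beta * t)" by (intro mult_left_mono) auto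
    moreover have "norm (f t) \<le> a" using a t by auto
    then have "\<bar>f t\<bar> \<le> max a 0" by simp
    ultimately show "\<bar>f t\<bar> \<le> max a 0 * exp (beta * t)" by simp
  qed simp
qed

lemma main:
  fixes z :: "nat \<Rightarrow> real \<Rightarrow> real"
  assumes z0: "continuous_on {0..Tmax} (z 0)"
    and zS: "\<forall>l. \<forall>t \<in> {0..Tmax}. z (Suc l) t = U (z l) t"
  shows "\<exists>zs. continuous_on {0..Tmax} zs
           \<and> (\<forall>t \<in> {0..Tmax}. zs t = U zs t)
           \<and> (\<forall>w. continuous_on {0..Tmax} w
                  \<and> (\<forall>t \<in> {0..Tmax}. w t = U w t)
                  \<longrightarrow> (\<forall>t \<in> {0..Tmax}. w t = zs t))
           \<and> uniform_limit {0..Tmax} z zs sequentially"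
proof -
  let ?I = "{0..Tmax}"
  have cz: "continuous_on ?I (z l)" for l
  proof (induction l)
    case 0 then show ?case by (rule z0)
  next
    case (Suc l)
    show ?case by (rule continuous_on_eq[OF U_cont[OF Suc]]) (use zS in auto)
  qed
  obtain c0 where c0: "c0 \<ge> 0" "\<forall>t\<in>?I. \<bar>z 1 t - z 0 t\<bar> \<le> c0 * exp (beta * t)"
    using bnd[of "\<lambda>t. z 1 t - z 0 t"] cz by (auto intro!: continuous_intros)
  have it: "\<forall>t\<in>?I. \<bar>z (Suc l) t - z l t\<bar> \<le> c0 / 2 ^ l * exp (beta * t)" for l
  proof (induction l)
    case 0 then show ?case using c0 by simp
  next
    case (Suc l)
    show ?case
    proof
      fix t assume t: "t \<in> ?I"
      have "\<bar>U (z (Suc l)) t - U (z l) t\<bar> \<le> c0 / 2 ^ l / 2 * exp (beta * t)"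
        by (rule contr[OF cz cz _ Suc t]) (use c0 in auto)
      then show "\<bar>z (Suc (Suc l)) t - z (Suc l) t\<bar> \<le> c0 / 2 ^ Suc l * exp (beta * t)"
        using zS t by (simp add: field_simps)
    qed
  qed
  define E where "E = exp (beta * Tmax)"
  define f where "f i t = z (Suc i) t - z i t" for i t
  have fb: "\<forall>t\<in>?I. norm (f i t) \<le> c0 * E * (1/2) ^ i" for i
  proof
    fix t assume t: "t \<in> ?I"
    have "exp (beta * t) \<le> E" unfolding E_def using t beta_pos by (auto intro: mult_left_mono)
    then have 2: "c0 / 2 ^ i * exp (beta * t) \<le> c0 / 2 ^ i * E"
      using c0 by (intro mult_left_mono) auto
    have 1: "\<bar>f i t\<bar> \<le> c0 / 2 ^ i * exp (beta * t)" unfolding f_def using it[of i] t by blast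
    have 3: "c0 / 2 ^ i * E = c0 * E * (1/2) ^ i" by (simp add: power_one_over)
    show "norm (f i t) \<le> c0 * E * (1/2) ^ i"
      using 1 2 3 by simp
  qed
  have sm: "summable (\<lambda>i. c0 * E * (1/2::real) ^ i)"
    by (intro summable_mult summable_geometric) simp
  have ul: "uniform_limit ?I (\<lambda>n t. \<Sum>i<n. f i t) (\<lambda>t. \<Sum>i. f i t) sequentially"
    by (rule Weierstrass_m_test_ev[OF always_eventually sm]) (use fb in auto)
  define zs where "zs t = z 0 t + (\<Sum>i. f i t)" for t
  have zeq: "z n t = z 0 t + (\<Sum>i<n. f i t)" for n t
    unfolding f_def using sum_lessThan_telescope[of "\<lambda>i. z i t" n] by simp
  have ulz: "uniform_limit ?I z zs sequentially"
    using ul unfolding uniform_limit_sequentially_iff zs_def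
    by (subst zeq) (simp add: dist_add_cancel)
  have czs: "continuous_on ?I zs"
    by (rule uniform_limit_theorem[OF always_eventually ulz]) (auto intro: cz)
  have fxp: "zs t = U zs t" if t: "t \<in> ?I" for t
  proof -
    define C where "C = exp (beta * t) / 2 + 1"
    have C: "C > 0" by (simp add: C_def add_pos_pos)
    have "\<bar>U zs t - zs t\<bar> \<le> e" if e: "e > 0" for e
    proof -
      have "e / C > 0" using e C by simp
      then obtain N where N: "\<forall>n\<ge>N. \<forall>x\<in>?I. dist (z n x) (zs x) < e / C"
        using ulz unfolding uniform_limit_sequentially_iff by blast
      have hb: "\<forall>x\<in>?I. \<bar>zs x - z N x\<bar> \<le> e / C * exp (beta * x)"
      proof
        fix x assume x: "x \<in> ?I"
        have "1 \<le> exp (beta * x)" using x beta_pos by simp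
        then have "e / C * 1 \<le> e / C * exp (beta * x)" using \<open>e / C > 0\<close> by (intro mult_left_mono) auto
        moreover have "\<bar>zs x - z N x\<bar> < e / C" using N x by (auto simp: dist_real_def abs_minus_commute)
        ultimately show "\<bar>zs x - z N x\<bar> \<le> e / C * exp (beta * x)" by simp
      qed
      have 1: "\<bar>U zs t - U (z N) t\<bar> \<le> e / C / 2 * exp (beta * t)"
        by (rule contr[OF czs cz _ hb t]) (use \<open>e / C > 0\<close> in auto)
      have 2: "\<bar>z (Suc N) t - zs t\<bar> < e / C" using N t by (auto simp: dist_real_def)
      have 3: "U (z N) t = z (Suc N) t" using zS t by simp
      have "\<bar>U zs t - zs t\<bar> \<le> e / C / 2 * exp (beta * t) + e / C" using 1 2 3 by linarith
      also have "\<dots> = e / C * (exp (beta * t) / 2 + 1)" by (simp add: algebra_simps)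
      also have "\<dots> = e" unfolding C_def[symmetric] using C by simp
      finally show ?thesis .
    qed
    note small = this
    have "\<bar>U zs t - zs t\<bar> \<le> 0"
    proof (rule field_le_epsilon)
      fix e :: real assume "0 < e"
      then show "\<bar>U zs t - zs t\<bar> \<le> 0 + e" using small by simp
    qed
    then show ?thesis by simp
  qed
  have uniq: "\<forall>t\<in>?I. w t = zs t" if w: "continuous_on ?I w" "\<forall>t\<in>?I. w t = U w t" for w
  proof -
    obtain c1 where c1: "c1 \<ge> 0" "\<forall>t\<in>?I. \<bar>w t - zs t\<bar> \<le> c1 * exp (beta * t)"
      using bnd[of "\<lambda>t. w t - zs t"] w(1) czs by (auto intro!: continuous_intros)
    have itw: "\<forall>t\<in>?I. \<bar>w t - zs t\<bar> \<le> c1 / 2 ^ n * exp (beta * t)" for n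
    proof (induction n)
      case 0 then show ?case using c1 by simp
    next
      case (Suc n)
      show ?case
      proof
        fix t assume t: "t \<in> ?I"
        have "\<bar>U w t - U zs t\<bar> \<le> c1 / 2 ^ n / 2 * exp (beta * t)"
          by (rule contr[OF w(1) czs _ Suc t]) (use c1 in auto)
        then show "\<bar>w t - zs t\<bar> \<le> c1 / 2 ^ Suc n * exp (beta * t)"
          using w(2) fxp t by (simp add: field_simps)
      qed
    qed
    show ?thesis
    proof
      fix t assume t: "t \<in> ?I"
      have lim: "(\<lambda>n. c1 * exp (beta * t) * (1/2::real) ^ n) \<longlonglongrightarrow> 0"
        by (intro tendsto_mult_right_zero LIMSEQ_realpow_zero) auto
      have "\<bar>w t - zs t\<bar> \<le> 0"
      proof (rule LIMSEQ_le_const[OF lim], intro exI allI impI)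
        fix n :: nat
        have eq: "c1 / 2 ^ n * exp (beta * t) = c1 * exp (beta * t) * (1/2) ^ n"
          by (simp add: power_one_over)
        show "\<bar>w t - zs t\<bar> \<le> c1 * exp (beta * t) * (1/2) ^ n"
          by (subst eq[symmetric]) (use itw[of n] t in blast)
      qed
      then show "w t = zs t" by simp
    qed
  qed
  show ?thesis using czs fxp uniq ulz by blast
qed

end
theorem corollary1:
  fixes Tmax Xmin Xmax G :: real
    and Td Ta :: "real set"
    and m F :: "(real \<times> real) measure"
    and V :: "real \<Rightarrow> real"
    and z0 :: "real \<Rightarrow> real"
    and z :: "nat \<Rightarrow> real \<Rightarrow> real"
  assumes Tmax: "0 < Tmax"
    and Td: "compact Td" "Td \<subseteq> {0..Tmax}"
    and Ta: "compact Ta" "Ta \<subseteq> {0..Tmax}"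
    and X: "0 \<le> Xmin" "Xmin < Xmax"
    and m: "prob_space m" "sets m = sets (restrict_space borel ({Xmin..Xmax} \<times> Ta))"
    and G: "G > 0"
    and V_nonneg: "\<forall>x \<ge> 0. V x \<ge> 0"
    and V_decr: "\<forall>x y. 0 \<le> x \<longrightarrow> x < y \<longrightarrow> V y < V x"
    and V_lip: "\<exists>L. L-lipschitz_on {0..} V"
    and F: "F \<in> P_mG Td Ta {Xmin..Xmax} m G"
    and z0: "continuous_on {0..Tmax} z0"
    and z_0: "\<forall>t \<in> {0..Tmax}. z 0 t = z0 t"
    and z_Suc: "\<forall>l. \<forall>t \<in> {0..Tmax}. z (Suc l) t = U_op Td {Xmin..Xmax} V F (z l) t"
  shows "\<exists>zs. continuous_on {0..Tmax} zs
           \<and> (\<forall>t \<in> {0..Tmax}. zs t = U_op Td {Xmin..Xmax} V F zs t)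
           \<and> (\<forall>w. continuous_on {0..Tmax} w
                  \<and> (\<forall>t \<in> {0..Tmax}. w t = U_op Td {Xmin..Xmax} V F w t)
                  \<longrightarrow> (\<forall>t \<in> {0..Tmax}. w t = zs t))
           \<and> uniform_limit {0..Tmax} z zs sequentially"
proof -
  obtain L where L: "L-lipschitz_on {0..} V" using V_lip by blast
  have Fp: "prob_space F" and Fs: "sets F = sets (restrict_space borel (Td \<times> {Xmin..Xmax}))"
    and Fd: "\<forall>B \<in> sets (borel :: (real \<times> real) measure). B \<subseteq> Td \<times> {Xmin..Xmax} \<longrightarrow>
          emeasure F B \<le> ennreal G * emeasure lborel B"
    using F unfolding P_mG_def mem_Collect_eq by blast+
  interpret setting Tmax G Xmin Xmax L Td F V
    by (rule setting.intro[OF Tmax Td(1) Td(2) X(2) G Fp Fs Fd L])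
  have "continuous_on {0..Tmax} (z 0)"
    by (rule continuous_on_eq[OF z0]) (use z_0 in auto)
  from main[OF this z_Suc] show ?thesis .
qed

end
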